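(* Let $X$ be a topological space and assume that for each sequence $(\mathcal{U}_n:n\in\mathbb{N})$ of $\omega$-covers of $X$ there are a positive integer $k$ and a sequence $(\mathcal{F}_n:n\in\mathbb{N})$ such that for each $n$, $\mathcal{F}_n\subseteq\mathcal{U}_n$ and $|\mathcal{F}_n|\le k$, and $\bigcup\{\mathcal{F}_n:n\in\mathbb{N}\}$ is an $\omega$-cover of $X$. Then $\textsf{S}_1(\Omega,\Omega)$ holds.
   Context: $\Omega$: the set of $\omega$-covers of $X$, i.e. open covers $\mathcal{U}$ with $X\notin\mathcal{U}$ such that every finite subset of $X$ lies in some member. $\textsf{S}_1(\Omega,\Omega)$: for every sequence $(\mathcal{U}_n)$ of $\omega$-covers there are $U_n\in\mathcal{U}_n$ such that $\{U_n:n\in\mathbb{N}\}$ is an $\omega$-cover. *)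

theory Defs
  imports "HOL-Analysis.Analysis"
begin

definition omega_cover :: "'a topology \<Rightarrow> 'a set set \<Rightarrow> bool" where
  "omega_cover T \<U> \<longleftrightarrow>
     (\<forall>U\<in>\<U>. openin T U) \<and> topspace T \<notin> \<U> \<and>
     (\<forall>F. finite F \<and> F \<subseteq> topspace T \<longrightarrow> (\<exists>U\<in>\<U>. F \<subseteq> U))"

definition S1_Omega_Omega :: "'a topology \<Rightarrow> bool" where
  "S1_Omega_Omega T \<longleftrightarrow>
     (\<forall>\<U> :: nat \<Rightarrow> 'a set set. (\<forall>n. omega_cover T (\<U> n)) \<longrightarrow>
        (\<exists>U :: nat \<Rightarrow> 'a set. (\<forall>n. U n \<in> \<U> n) \<and> omega_cover T (range U)))"

end

theory Submission
  imports Defs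
begin

lemma ocD1: "omega_cover T U \<Longrightarrow> W \<in> U \<Longrightarrow> openin T W"
  unfolding omega_cover_def by blast
lemma ocD2: "omega_cover T U \<Longrightarrow> topspace T \<notin> U"
  unfolding omega_cover_def by blast
lemma ocD3: "omega_cover T U \<Longrightarrow> finite F \<Longrightarrow> F \<subseteq> topspace T \<Longrightarrow> \<exists>W\<in>U. F \<subseteq> W"
  unfolding omega_cover_def by blast

lemma inter_omega:
  fixes n :: nat
  assumes om: "\<And>m. omega_cover T (\<U> m)"
  shows "omega_cover T {\<Inter> (f ` {..n}) | f. \<forall>i\<le>n. f i \<in> \<U> (g i)}"
  unfolding omega_cover_def
proof (intro conjI ballI allI impI)
  fix W assume "W \<in> {\<Inter> (f ` {..n}) | f. \<forall>i\<le>n. f i \<in> \<U> (g i)}"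
  then obtain f where W: "W = \<Inter> (f ` {..n})" and f: "\<forall>i\<le>n. f i \<in> \<U> (g i)" by blast
  have "\<forall>i\<le>n. openin T (f i)" using f ocD1[OF om] by blast
  then show "openin T W" unfolding W by (intro openin_Inter) auto
next
  show "topspace T \<notin> {\<Inter> (f ` {..n}) | f. \<forall>i\<le>n. f i \<in> \<U> (g i)}"
  proof
    assume "topspace T \<in> {\<Inter> (f ` {..n}) | f. \<forall>i\<le>n. f i \<in> \<U> (g i)}"
    then obtain f where W: "topspace T = \<Inter> (f ` {..n})" and f: "\<forall>i\<le>n. f i \<in> \<U> (g i)" by blast
    have f0: "f 0 \<in> \<U> (g 0)" using f by auto
    have o: "openin T (f 0)" using ocD1[OF om f0] .
    have nt: "topspace T \<notin> \<U> (g 0)" using ocD2[OF om] .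
    have s1: "topspace T \<subseteq> f 0" unfolding W by (rule Inter_lower) simp
    have s2: "f 0 \<subseteq> topspace T" using o by (rule openin_subset)
    have "f 0 = topspace T" using s1 s2 by (rule subset_antisym[rotated])
    then show False using f0 nt by simp
  qed
next
  fix F assume F: "finite F \<and> F \<subseteq> topspace T"
  have "\<forall>i. \<exists>U. U \<in> \<U> (g i) \<and> F \<subseteq> U" using ocD3[OF om] F by blast
  from choice[OF this] obtain f where f: "\<forall>i. f i \<in> \<U> (g i) \<and> F \<subseteq> f i" by blast
  have mem: "\<Inter> (f ` {..n}) \<in> {\<Inter> (f ` {..n}) | f. \<forall>i\<le>n. f i \<in> \<U> (g i)}"
    using f by blast
  have sub: "F \<subseteq> \<Inter> (f ` {..n})" using f by blast
  show "\<exists>U\<in>{\<Inter> (f ` {..n}) | f. \<forall>i\<le>n. f i \<in> \<U> (g i)}. F \<subseteq> U"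
    using mem sub by blast
qed

lemma omega_tail:
  assumes om: "omega_cover T (G \<union> H)" and fin: "finite G"
  and HX: "\<And>W. W \<in> H \<Longrightarrow> openin T W \<and> W \<noteq> topspace T"
  shows "\<forall>A. finite A \<and> A \<subseteq> topspace T \<longrightarrow> (\<exists>W\<in>H - G. A \<subseteq> W)"
proof (intro allI impI)
  fix A assume A: "finite A \<and> A \<subseteq> topspace T"
  have "\<forall>W\<in>G. \<exists>x. x \<in> topspace T \<and> x \<notin> W"
  proof
    fix W assume "W \<in> G"
    then have "openin T W" "W \<noteq> topspace T" using ocD1[OF om] ocD2[OF om] by auto
    then show "\<exists>x. x \<in> topspace T \<and> x \<notin> W" using openin_subset[of T W] by blast
  qed
  then obtain x where x: "\<forall>W\<in>G. x W \<in> topspace T \<and> x W \<notin> W" by metis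
  have f1: "finite (A \<union> x ` G)" using A fin by simp
  have f2: "A \<union> x ` G \<subseteq> topspace T" using A x by blast
  obtain W where W: "W \<in> G \<union> H" "A \<union> x ` G \<subseteq> W" using ocD3[OF om f1 f2] by blast
  have "W \<notin> G" using W x by blast
  then show "\<exists>W\<in>H - G. A \<subseteq> W" using W by blast
qed

theorem corollary3p4:
  fixes T :: "'a topology"
  assumes "\<forall>\<U> :: nat \<Rightarrow> 'a set set. (\<forall>n. omega_cover T (\<U> n)) \<longrightarrow>
             (\<exists>(k::nat) (\<F> :: nat \<Rightarrow> 'a set set). k > 0 \<and>
                (\<forall>n. \<F> n \<subseteq> \<U> n \<and> finite (\<F> n) \<and> card (\<F> n) \<le> k) \<and>
                omega_cover T (\<Union>n. \<F> n))"
  shows "S1_Omega_Omega T"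
  unfolding S1_Omega_Omega_def
proof (intro allI impI)
  fix \<U> :: "nat \<Rightarrow> 'a set set"
  assume om: "\<forall>n. omega_cover T (\<U> n)"
  define V where "V n = {\<Inter> (f ` {..n}) | f. \<forall>i\<le>n. f i \<in> \<U> (prod_encode (n, i))}" for n
  have omV: "\<forall>n. omega_cover T (V n)" unfolding V_def
    using om by (intro allI inter_omega) auto
  then obtain k \<F> where kpos: "k > 0" and F: "\<forall>n. \<F> n \<subseteq> V n \<and> finite (\<F> n) \<and> card (\<F> n) \<le> k"
    and omF: "omega_cover T (\<Union>n. \<F> n)"
    using assms by blast
  have "\<forall>n. \<exists>h. bij_betw h (\<F> n) {0..<card (\<F> n)}" using F ex_bij_betw_finite_nat by blast
  then obtain h where h: "\<forall>n. bij_betw (h n) (\<F> n) {0..<card (\<F> n)}" by metis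
  define P where "P m s \<longleftrightarrow> (\<forall>n i. m = prod_encode (n, i) \<and> k \<le> n \<and> i < card (\<F> n) \<longrightarrow>
       inv_into (\<F> n) (h n) i \<subseteq> s)" for m s
  have "\<forall>m. \<exists>s\<in>\<U> m. P m s"
  proof
    fix m
    define n where "n = fst (prod_decode m)"
    define i where "i = snd (prod_decode m)"
    have m: "m = prod_encode (n, i)" unfolding n_def i_def by simp
    show "\<exists>s\<in>\<U> m. P m s"
    proof (cases "k \<le> n \<and> i < card (\<F> n)")
      case True
      let ?W = "inv_into (\<F> n) (h n) i"
      have "i \<in> h n ` \<F> n" using h True by (simp add: bij_betw_def)
      then have "?W \<in> \<F> n" by (rule inv_into_into)
      then have "?W \<in> V n" using F by blast
      then obtain f where W: "?W = \<Inter> (f ` {..n})" and f: "\<forall>j\<le>n. f j \<in> \<U> (prod_encode (n, j))"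
        unfolding V_def by blast
      have "card (\<F> n) \<le> k" using F by blast
      then have iln: "i \<le> n" using True by linarith
      have "?W \<subseteq> f i" using W iln by blast
      then have "P m (f i)" unfolding P_def using m by (simp add: prod_encode_eq)
      moreover have "f i \<in> \<U> m" using f iln m by auto
      ultimately show ?thesis by blast
    next
      case False
      have "\<exists>U\<in>\<U> m. {} \<subseteq> U" using ocD3[OF om[rule_format, of m], of "{}"] by simp
      then obtain s where "s \<in> \<U> m" by blast
      moreover have "P m s" unfolding P_def using False m by (simp add: prod_encode_eq) blast
      ultimately show ?thesis by blast
    qed
  qed
  then have "\<forall>m. \<exists>s. s \<in> \<U> m \<and> P m s" by blast
  then obtain S where S: "\<forall>m. S m \<in> \<U> m \<and> P m (S m)"
    using choice[of "\<lambda>m s. s \<in> \<U> m \<and> P m s"] by blast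
  have key: "\<exists>m. W \<subseteq> S m" if "W \<in> \<F> n" "k \<le> n" for W n
  proof -
    have hi: "h n W < card (\<F> n)" using bij_betwE[OF h[rule_format, of n]] that(1) by auto
    have inv: "inv_into (\<F> n) (h n) (h n W) = W" using bij_betw_inv_into_left[OF h[rule_format, of n] that(1)] .
    have "P (prod_encode (n, h n W)) (S (prod_encode (n, h n W)))" using S by blast
    then have "inv_into (\<F> n) (h n) (h n W) \<subseteq> S (prod_encode (n, h n W))"
      unfolding P_def using hi that(2) by blast
    then have "W \<subseteq> S (prod_encode (n, h n W))" using inv by simp
    then show ?thesis by blast
  qed
  show "\<exists>U. (\<forall>n. U n \<in> \<U> n) \<and> omega_cover T (range U)"
  proof (intro exI conjI)
    show "\<forall>n. S n \<in> \<U> n" using S by blast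
    show "omega_cover T (range S)"
      unfolding omega_cover_def
    proof (intro conjI ballI allI impI)
      fix U assume "U \<in> range S"
      then obtain m where "U = S m" by blast
      then show "openin T U" using S ocD1[OF om[rule_format, of m]] by blast
    next
      show "topspace T \<notin> range S" using S ocD2[OF om[rule_format]] by (metis imageE)
    next
      fix A assume A: "finite A \<and> A \<subseteq> topspace T"
      let ?G = "\<Union>n<k. \<F> n" and ?H = "\<Union>n\<in>{k..}. \<F> n"
      have eq: "(\<Union>n. \<F> n) = ?G \<union> ?H" 
      proof (rule set_eqI)
        fix W show "W \<in> (\<Union>n. \<F> n) \<longleftrightarrow> W \<in> ?G \<union> ?H"
        proof
          assume "W \<in> (\<Union>n. \<F> n)"
          then obtain n where n: "W \<in> \<F> n" by blast
          show "W \<in> ?G \<union> ?H"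
          proof (cases "n < k")
            case True then show ?thesis using n by blast
          next
            case False then have "n \<in> {k..}" by simp
            then show ?thesis using n by blast
          qed
        qed blast
      qed
      have HX: "openin T W \<and> W \<noteq> topspace T" if "W \<in> ?H" for W
      proof -
        have "W \<in> (\<Union>n. \<F> n)" using that by blast
        moreover have "\<forall>U\<in>(\<Union>n. \<F> n). openin T U" "topspace T \<notin> (\<Union>n. \<F> n)"
          using ocD1[OF omF] ocD2[OF omF] by auto
        ultimately show ?thesis by metis
      qed
      have finG: "finite ?G" using F by auto
      have omGH: "omega_cover T (?G \<union> ?H)" using omF eq by simp
      have "\<exists>W\<in>?H - ?G. A \<subseteq> W"
        using omega_tail[OF omGH finG HX] A by blast
      then obtain W where W: "W \<in> ?H" "A \<subseteq> W" by blast
      then obtain n where "W \<in> \<F> n" "k \<le> n" by auto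
      then obtain m where "W \<subseteq> S m" using key by blast
      then show "\<exists>U\<in>range S. A \<subseteq> U" using W by blast
    qed
  qed
qed

end
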